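(* Let $\varepsilon>0$ and $x_0$ satisfy $0\le x_0<\tfrac14$ and $\dfrac{\varepsilon^2}{\frac14-\varepsilon^2x_0}<1$; let $\mathcal{C}(\theta)=\tfrac14-\varepsilon^2x_0-\varepsilon^2e^{2\pi i\theta}$, $q_c(z)=z^2+c$, and $\tilde\gamma(\theta)=\tfrac12+\varepsilon e^{2\pi i\theta}\sqrt{1+x_0e^{-4\pi i\theta}}$ (principal branch), $\theta\in\mathbb{T}^1$. Let $\alpha>0$. For each $\theta\in\mathbb{T}^1$ let $\tilde\ell_\theta$ be the affine map of $\mathbb{C}$ with $\tilde\ell_\theta(\tilde\gamma(\theta))=\tilde\gamma(\theta+\tfrac\alpha2)$ and $\tilde\ell_\theta(\tilde\gamma(\theta+\tfrac12))=\tilde\gamma(\theta+\tfrac12+\tfrac\alpha2)$, and define the fibred quadratic polynomial $$\widetilde Q(\theta,\zeta)=\big(\theta+\tfrac\alpha2,\ \tilde\ell_\theta\circ q_{\mathcal{C}(\langle2\theta\rangle)}(\zeta)\big).$$ Then $\tilde\gamma$ is an invariant curve for $\widetilde Q$, i.e. $\tilde\ell_\theta\big(q_{\mathcal{C}(\langle2\theta\rangle)}(\tilde\gamma(\theta))\big)=\tilde\gamma(\theta+\tfrac\alpha2)$ for all $\theta\in\mathbb{T}^1$.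
   Context: $\mathbb{T}^1=\mathbb{R}/\mathbb{Z}$, $\langle x\rangle$ is the fractional part of $x$. The affine map $\tilde\ell_\theta$ is the degree-one Lagrange interpolation polynomial through the two prescribed pairs of points (the points $\tilde\gamma(\theta)$ and $\tilde\gamma(\theta+\frac12)$ are distinct). *)

theory Defs
  imports "HOL-Analysis.Analysis"
begin

text \<open>The circle T^1 = R/Z is represented by real parameters; every function below is
  1-periodic in theta, so quantifying over all reals is the same as over T^1.\<close>

definition frac_part :: "real \<Rightarrow> real" where
  "frac_part x = x - of_int \<lfloor>x\<rfloor>"

definition Ccal :: "real \<Rightarrow> real \<Rightarrow> real \<Rightarrow> complex" where
  "Ccal eps x0 theta = 1/4 - of_real (eps^2 * x0) - of_real (eps^2) * cis (2 * pi * theta)"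

definition qpoly :: "complex \<Rightarrow> complex \<Rightarrow> complex" where
  "qpoly c z = z^2 + c"

definition gamma_t :: "real \<Rightarrow> real \<Rightarrow> real \<Rightarrow> complex" where
  "gamma_t eps x0 theta =
     1/2 + of_real eps * cis (2 * pi * theta) * csqrt (1 + of_real x0 * cis (- 4 * pi * theta))"

text \<open>Degree-one Lagrange interpolation: the affine map sending z1 to w1 and z2 to w2.\<close>
definition affine_interp :: "complex \<Rightarrow> complex \<Rightarrow> complex \<Rightarrow> complex \<Rightarrow> complex \<Rightarrow> complex" where
  "affine_interp z1 w1 z2 w2 z = w1 * (z - z2) / (z1 - z2) + w2 * (z - z1) / (z2 - z1)"

definition ell_t :: "real \<Rightarrow> real \<Rightarrow> real \<Rightarrow> real \<Rightarrow> complex \<Rightarrow> complex" where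
  "ell_t eps x0 alpha theta =
     affine_interp (gamma_t eps x0 theta) (gamma_t eps x0 (theta + alpha/2))
                   (gamma_t eps x0 (theta + 1/2)) (gamma_t eps x0 (theta + 1/2 + alpha/2))"

end

theory Submission
  imports Defs
begin

lemma cis_int: "cis (2 * pi * of_int k) = 1"
proof -
  have "cos (2 * pi * of_int k) = 1" "sin (2 * pi * of_int k) = 0"
    using cos_int_2pin[of k] sin_int_2pin[of k] by (simp_all add: mult_ac)
  thus ?thesis by (simp add: complex_eq_iff)
qed

lemma cis_frac: "cis (2 * pi * frac_part x) = cis (2 * pi * x)"
proof -
  have eq: "2 * pi * frac_part x = 2 * pi * x + 2 * pi * of_int (- \<lfloor>x\<rfloor>)"
    by (simp add: frac_part_def algebra_simps)
  have "cis (2 * pi * frac_part x) = cis (2 * pi * x) * cis (2 * pi * of_int (- \<lfloor>x\<rfloor>))"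
    by (simp only: eq cis_mult)
  thus ?thesis by (simp only: cis_int mult_1_right)
qed

lemma fixpt:
  "qpoly (Ccal eps x0 (frac_part (2 * theta))) (gamma_t eps x0 theta) = gamma_t eps x0 theta"
proof -
  define e where "e = cis (2 * pi * theta)"
  define r where "r = csqrt (1 + of_real x0 * cis (- 4 * pi * theta))"
  have r2: "r^2 = 1 + of_real x0 * cis (- 4 * pi * theta)" unfolding r_def by simp
  have e2: "cis (2 * pi * (2 * theta)) = e^2"
  proof -
    have "e^2 = cis (2 * pi * theta + 2 * pi * theta)" unfolding e_def power2_eq_square by (simp only: cis_mult)
    also have "2 * pi * theta + 2 * pi * theta = 2 * pi * (2 * theta)" by simp
    finally show ?thesis by simp
  qed
  have ee: "e^2 * cis (- 4 * pi * theta) = 1"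
  proof -
    have "e^2 * cis (- 4 * pi * theta) = cis (2 * pi * (2 * theta) + - 4 * pi * theta)"
      by (simp only: e2[symmetric] cis_mult)
    also have "2 * pi * (2 * theta) + - 4 * pi * theta = 0" by simp
    finally show ?thesis by simp
  qed
  have "qpoly (Ccal eps x0 (frac_part (2 * theta))) (gamma_t eps x0 theta)
     = (1/2 + of_real eps * e * r)^2 + 1/4 - of_real (eps^2 * x0) - of_real (eps^2) * e^2"
    unfolding qpoly_def Ccal_def gamma_t_def cis_frac e2 e_def r_def by simp
  also have "\<dots> = 1/2 + of_real eps * e * r + of_real (eps^2) * (e^2 * r^2 - x0 - e^2)"
    by (simp add: algebra_simps power2_eq_square)
  also have "e^2 * r^2 - x0 - e^2 = 0"
    unfolding r2 using ee by (simp add: algebra_simps)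
  finally show ?thesis unfolding gamma_t_def e_def r_def by simp
qed

lemma half_shift:
  "gamma_t eps x0 (theta + 1/2) = 1 - gamma_t eps x0 theta"
proof -
  have a: "cis (2 * pi * (theta + 1/2)) = - cis (2 * pi * theta)"
    by (simp add: distrib_left cis_mult[symmetric])
  have b: "cis (- 4 * pi * (theta + 1/2)) = cis (- 4 * pi * theta)"
  proof -
    have "- 4 * pi * (theta + 1/2) = - 4 * pi * theta + 2 * pi * of_int (-1)" by (simp add: algebra_simps)
    then have "cis (- 4 * pi * (theta + 1/2)) = cis (- 4 * pi * theta) * cis (2 * pi * of_int (-1))"
      by (simp only: cis_mult)
    thus ?thesis by (simp only: cis_int mult_1_right)
  qed
  show ?thesis unfolding gamma_t_def a b by simp
qed

lemma distinct_pts: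
  assumes "eps > 0" "0 \<le> x0" "x0 < 1/4"
  shows "gamma_t eps x0 theta \<noteq> gamma_t eps x0 (theta + 1/2)"
proof
  assume "gamma_t eps x0 theta = gamma_t eps x0 (theta + 1/2)"
  hence "gamma_t eps x0 theta = 1/2" unfolding half_shift by (simp add: field_simps)
  hence "of_real eps * cis (2 * pi * theta) * csqrt (1 + of_real x0 * cis (- 4 * pi * theta)) = 0"
    unfolding gamma_t_def by simp
  hence "csqrt (1 + of_real x0 * cis (- 4 * pi * theta)) = 0" using assms by simp
  hence z: "1 + of_real x0 * cis (- 4 * pi * theta) = 0"
    by (metis power2_csqrt power_zero_numeral)
  have "norm (of_real x0 * cis (- 4 * pi * theta)) < 1" using assms by (simp add: norm_mult)
  moreover have "of_real x0 * cis (- 4 * pi * theta) = -1" using z by (simp add: add_eq_0_iff)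
  ultimately show False by simp
qed

theorem mainTheorem3:
  fixes eps x0 alpha :: real
  assumes "eps > 0" and "0 \<le> x0" and "x0 < 1/4"
    and "eps^2 / (1/4 - eps^2 * x0) < 1"
    and "alpha > 0"
  shows "\<forall>theta::real.
     ell_t eps x0 alpha theta (qpoly (Ccal eps x0 (frac_part (2 * theta))) (gamma_t eps x0 theta))
       = gamma_t eps x0 (theta + alpha/2)"
proof
  fix theta :: real
  have d: "gamma_t eps x0 theta - gamma_t eps x0 (theta + 1/2) \<noteq> 0"
    using distinct_pts[OF assms(1-3)] by simp
  show "ell_t eps x0 alpha theta (qpoly (Ccal eps x0 (frac_part (2 * theta))) (gamma_t eps x0 theta))
       = gamma_t eps x0 (theta + alpha/2)"
    unfolding fixpt ell_t_def affine_interp_def using d by simp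
qed

end
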